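(* Let $G=(V,A)$ be a graph, $\mathfrak n=\mathfrak n(G)$, and $\delta$ a Lie bialgebra structure on $\mathfrak n$ with $\delta(\mathfrak z)=0$ and such that for every vertex $e_i$, $\delta(e_i)=\sum_{\alpha\in A}\lambda_{i,\alpha}\,e_i\wedge\alpha+\omega_i$ for some scalars $\lambda_{i,\alpha}$ and some $\omega_i\in\Lambda^2\mathfrak z$ (i.e. the maps $D_\alpha$ with $\delta(v)\equiv\sum_\alpha D_\alpha(v)\wedge\alpha \bmod \Lambda^2\mathfrak z$ are diagonal in the vertex basis with $D_\alpha(e_i)=\lambda_{i,\alpha}e_i$). If $\alpha_0\in A$ joins $e_{i_0}$ and $e_{j_0}$, then $\lambda_{i_0,\alpha}=-\lambda_{j_0,\alpha}$ for all $\alpha\in A$ with $\alpha\ne\alpha_0$.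
   Context: $G=(V,A)$ is a finite simple graph without loops and without isolated vertices, $V=\{e_1,\dots,e_n\}$ ordered, each edge joining $e_i,e_j$ ($i<j$) oriented from $e_i$ to $e_j$. $\mathfrak n(G)$ over a field of characteristic zero has basis $V\cup A$, $[e_i,e_j]=\alpha$ if $\alpha$ goes from $e_i$ to $e_j$, $[e_i,e_j]=0$ if not adjacent, edges central; $\mathfrak z=\mathrm{span}(A)$. Lie bialgebra structure: linear $\delta:\mathfrak n\to\Lambda^2\mathfrak n$ with co-Jacobi and the 1-cocycle condition $\delta[x,y]=[\delta x,y]+[x,\delta y]$. *)

theory Defs
  imports Main
begin

text \<open>Graph: vertices V (a finite set of a linearly ordered type), edges A given as
  ordered pairs (i,j) with i < j (the edge oriented from e_i to e_j).
  Basis of n(G): Inl v for vertices, Inr a for edges.  Elements of n(G) are coordinate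
  functions supported on the basis; elements of Lambda^2 n(G) are skew-symmetric
  coefficient matrices w, where e_b wedge e_c corresponds to E_bc - E_cb.\<close>

definition graph :: "'v::linorder set \<Rightarrow> ('v \<times> 'v) set \<Rightarrow> bool" where
  "graph V A \<longleftrightarrow> finite V \<and> (\<forall>(i,j)\<in>A. i \<in> V \<and> j \<in> V \<and> i < j)
     \<and> (\<forall>v\<in>V. \<exists>a\<in>A. v = fst a \<or> v = snd a)"

definition basis :: "'v set \<Rightarrow> ('v \<times> 'v) set \<Rightarrow> ('v + ('v \<times> 'v)) set" where
  "basis V A = Inl ` V \<union> Inr ` A"

definition nvec :: "'v set \<Rightarrow> ('v \<times> 'v) set \<Rightarrow> (('v + ('v \<times> 'v)) \<Rightarrow> 'k::field) \<Rightarrow> bool" where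
  "nvec V A x \<longleftrightarrow> (\<forall>b. b \<notin> basis V A \<longrightarrow> x b = 0)"

definition lam2 :: "'v set \<Rightarrow> ('v \<times> 'v) set
    \<Rightarrow> (('v + ('v \<times> 'v)) \<Rightarrow> ('v + ('v \<times> 'v)) \<Rightarrow> 'k::field) \<Rightarrow> bool" where
  "lam2 V A w \<longleftrightarrow> (\<forall>p q. w p q = - w q p)
     \<and> (\<forall>p q. p \<notin> basis V A \<or> q \<notin> basis V A \<longrightarrow> w p q = 0)"

definition lam2z :: "('v \<times> 'v) set
    \<Rightarrow> (('v + ('v \<times> 'v)) \<Rightarrow> ('v + ('v \<times> 'v)) \<Rightarrow> 'k::field) \<Rightarrow> bool" where
  "lam2z A w \<longleftrightarrow> (\<forall>p q. w p q = - w q p)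
     \<and> (\<forall>p q. p \<notin> Inr ` A \<or> q \<notin> Inr ` A \<longrightarrow> w p q = 0)"

definition unitv :: "'b \<Rightarrow> 'b \<Rightarrow> 'k::field" where
  "unitv b = (\<lambda>c. if c = b then 1 else 0)"

definition wedge :: "('b \<Rightarrow> 'k::field) \<Rightarrow> ('b \<Rightarrow> 'k) \<Rightarrow> 'b \<Rightarrow> 'b \<Rightarrow> 'k" where
  "wedge x y = (\<lambda>p q. x p * y q - x q * y p)"

text \<open>Lie bracket of n(G): [e_i,e_j] = alpha if alpha = (i,j) in A, edges central.\<close>
definition br :: "('v \<times> 'v) set \<Rightarrow> (('v + ('v \<times> 'v)) \<Rightarrow> 'k::field)
    \<Rightarrow> (('v + ('v \<times> 'v)) \<Rightarrow> 'k) \<Rightarrow> ('v + ('v \<times> 'v)) \<Rightarrow> 'k" where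
  "br A x y = (\<lambda>b. case b of Inl _ \<Rightarrow> 0
      | Inr (i,j) \<Rightarrow> if (i,j) \<in> A then x (Inl i) * y (Inl j) - x (Inl j) * y (Inl i) else 0)"

text \<open>[w, z] for w in Lambda^2 n, z in n:  [a wedge b, z] = [a,z] wedge b + a wedge [b,z].\<close>
definition actR :: "'v set \<Rightarrow> ('v \<times> 'v) set
    \<Rightarrow> (('v + ('v \<times> 'v)) \<Rightarrow> ('v + ('v \<times> 'v)) \<Rightarrow> 'k::field)
    \<Rightarrow> (('v + ('v \<times> 'v)) \<Rightarrow> 'k) \<Rightarrow> ('v + ('v \<times> 'v)) \<Rightarrow> ('v + ('v \<times> 'v)) \<Rightarrow> 'k" where
  "actR V A w z = (\<lambda>p q. (\<Sum>b\<in>basis V A. w b q * br A (unitv b) z p)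
                      + (\<Sum>c\<in>basis V A. w p c * br A (unitv c) z q))"

text \<open>Lie bialgebra structure: delta linear n -> Lambda^2 n, 1-cocycle
  delta[x,y] = [delta x, y] + [x, delta y] (with [x, w] = - [w, x]), and co-Jacobi
  (the dual bracket on n^* satisfies Jacobi).\<close>
definition lie_bialg :: "'v::linorder set \<Rightarrow> ('v \<times> 'v) set
    \<Rightarrow> ((('v + ('v \<times> 'v)) \<Rightarrow> 'k::field) \<Rightarrow> ('v + ('v \<times> 'v)) \<Rightarrow> ('v + ('v \<times> 'v)) \<Rightarrow> 'k) \<Rightarrow> bool" where
  "lie_bialg V A \<delta> \<longleftrightarrow>
     (\<forall>x. nvec V A x \<longrightarrow> lam2 V A (\<delta> x))
   \<and> (\<forall>x y. nvec V A x \<longrightarrow> nvec V A y \<longrightarrow> \<delta> (\<lambda>b. x b + y b) = (\<lambda>p q. \<delta> x p q + \<delta> y p q))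
   \<and> (\<forall>c x. nvec V A x \<longrightarrow> \<delta> (\<lambda>b. c * x b) = (\<lambda>p q. c * \<delta> x p q))
   \<and> (\<forall>x y. nvec V A x \<longrightarrow> nvec V A y \<longrightarrow>
        \<delta> (br A x y) = (\<lambda>p q. actR V A (\<delta> x) y p q - actR V A (\<delta> y) x p q))
   \<and> (\<forall>p\<in>basis V A. \<forall>q\<in>basis V A. \<forall>r\<in>basis V A. \<forall>a\<in>basis V A.
        (\<Sum>s\<in>basis V A. \<delta> (unitv s) p q * \<delta> (unitv a) s r
                        + \<delta> (unitv s) q r * \<delta> (unitv a) s p
                        + \<delta> (unitv s) r p * \<delta> (unitv a) s q) = 0)"

end

theory Submission
  imports Defs
begin

lemma sum_unitv:
  assumes "finite S" "x \<in> S"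
  shows "(\<Sum>b\<in>S. f b * unitv b x) = (f x :: 'k::field)"
proof -
  have "(\<Sum>b\<in>S. f b * unitv b x) = (\<Sum>b\<in>S. if x = b then f b else 0)"
    by (rule sum.cong) (auto simp: unitv_def)
  also have "\<dots> = f x" using assms by simp
  finally show ?thesis .
qed

theorem mainTheorem15:
  fixes V :: "'v::linorder set" and A :: "('v \<times> 'v) set"
    and \<delta> :: "(('v + ('v \<times> 'v)) \<Rightarrow> 'k::field_char_0) \<Rightarrow> ('v + ('v \<times> 'v)) \<Rightarrow> ('v + ('v \<times> 'v)) \<Rightarrow> 'k"
    and lam :: "'v \<Rightarrow> ('v \<times> 'v) \<Rightarrow> 'k"
    and \<omega> :: "'v \<Rightarrow> ('v + ('v \<times> 'v)) \<Rightarrow> ('v + ('v \<times> 'v)) \<Rightarrow> 'k"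
  assumes G: "graph V A"
    and bialg: "lie_bialg V A \<delta>"
    and z0: "\<forall>a\<in>A. \<delta> (unitv (Inr a)) = (\<lambda>p q. 0)"
    and om: "\<forall>i\<in>V. lam2z A (\<omega> i)"
    and diag: "\<forall>i\<in>V. \<delta> (unitv (Inl i)) =
        (\<lambda>p q. (\<Sum>\<alpha>\<in>A. lam i \<alpha> * wedge (unitv (Inl i)) (unitv (Inr \<alpha>)) p q) + \<omega> i p q)"
    and a0: "(i0, j0) \<in> A"
  shows "\<forall>\<alpha>\<in>A. \<alpha> \<noteq> (i0, j0) \<longrightarrow> lam i0 \<alpha> = - lam j0 \<alpha>"
proof (intro ballI impI)
  fix \<alpha> assume aA: "\<alpha> \<in> A" and ne: "\<alpha> \<noteq> (i0, j0)"
  have finV: "finite V" and AV: "\<And>i j. (i,j) \<in> A \<Longrightarrow> i \<in> V \<and> j \<in> V \<and> i < j"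
    using G unfolding graph_def by auto
  have "A \<subseteq> V \<times> V" using AV by auto
  hence finA: "finite A" using finV by (meson finite_SigmaI finite_subset)
  have finB: "finite (basis V A)" unfolding basis_def using finV finA by simp
  have ij: "i0 \<in> V" "j0 \<in> V" "i0 < j0" using AV[OF a0] by auto
  obtain a b where ab: "\<alpha> = (a,b)" by (cases \<alpha>)
  have abV: "a \<in> V" "b \<in> V" "a < b" using AV aA ab by auto
  have F1: "\<delta> (unitv (Inl k)) (Inl x) (Inr \<gamma>) = (if x = k then lam k \<gamma> else 0)"
    if "k \<in> V" "\<gamma> \<in> A" for k x \<gamma>
  proof -
    have o: "\<omega> k (Inl x) (Inr \<gamma>) = 0"
    proof -
      have "\<forall>p q. p \<notin> Inr ` A \<or> q \<notin> Inr ` A \<longrightarrow> \<omega> k p q = 0" using om that unfolding lam2z_def by blast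
      thus ?thesis by blast
    qed
    have "(\<Sum>\<beta>\<in>A. lam k \<beta> * wedge (unitv (Inl k)) (unitv (Inr \<beta>)) (Inl x) (Inr \<gamma>))
        = (\<Sum>\<beta>\<in>A. (if x = k then lam k \<beta> else 0) * unitv \<beta> \<gamma>)"
      by (rule sum.cong) (auto simp: wedge_def unitv_def)
    also have "\<dots> = (if x = k then lam k \<gamma> else 0)"
      using sum_unitv[OF finA that(2)] .
    finally show ?thesis using diag that o by simp
  qed
  have F2: "\<delta> (unitv (Inl k)) (Inr \<gamma>) (Inl x) = (if x = k then - lam k \<gamma> else 0)"
    if "k \<in> V" "\<gamma> \<in> A" for k x \<gamma>
  proof -
    have o: "\<omega> k (Inr \<gamma>) (Inl x) = 0"
    proof -
      have "\<forall>p q. p \<notin> Inr ` A \<or> q \<notin> Inr ` A \<longrightarrow> \<omega> k p q = 0" using om that unfolding lam2z_def by blast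
      thus ?thesis by blast
    qed
    have "(\<Sum>\<beta>\<in>A. lam k \<beta> * wedge (unitv (Inl k)) (unitv (Inr \<beta>)) (Inr \<gamma>) (Inl x))
        = (\<Sum>\<beta>\<in>A. (if x = k then - lam k \<beta> else 0) * unitv \<beta> \<gamma>)"
      by (rule sum.cong) (auto simp: wedge_def unitv_def)
    also have "\<dots> = (if x = k then - lam k \<gamma> else 0)"
      using sum_unitv[OF finA that(2)] .
    finally show ?thesis using diag that o by simp
  qed
  have ACT: "actR V A (\<delta> (unitv (Inl k))) (unitv (Inl m)) (Inr (i0,j0)) (Inr \<alpha>)
      = (if m = j0 then lam k \<alpha> else - lam k \<alpha>)"
    if km: "(k = i0 \<and> m = j0) \<or> (k = j0 \<and> m = i0)" for k m
  proof -
    let ?w = "\<delta> (unitv (Inl k))"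
    have kV: "k \<in> V" using km ij by auto
    have s1: "(\<Sum>c\<in>basis V A. ?w c (Inr \<alpha>) * br A (unitv c) (unitv (Inl m)) (Inr (i0,j0)))
        = (if m = j0 then lam k \<alpha> else - lam k \<alpha>)"
    proof -
      have "(\<Sum>c\<in>basis V A. ?w c (Inr \<alpha>) * br A (unitv c) (unitv (Inl m)) (Inr (i0,j0)))
         = (\<Sum>c\<in>basis V A. (if m = j0 then ?w c (Inr \<alpha>) else 0) * unitv c (Inl i0))
         - (\<Sum>c\<in>basis V A. (if m = i0 then ?w c (Inr \<alpha>) else 0) * unitv c (Inl j0))"
        unfolding sum_subtractf[symmetric]
        by (rule sum.cong) (use a0 in \<open>auto simp: br_def unitv_def\<close>)
      also have "\<dots> = (if m = j0 then ?w (Inl i0) (Inr \<alpha>) else 0)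
                   - (if m = i0 then ?w (Inl j0) (Inr \<alpha>) else 0)"
      proof -
        have b1: "Inl i0 \<in> basis V A" "Inl j0 \<in> basis V A" using ij unfolding basis_def by auto
        show ?thesis using sum_unitv[OF finB b1(1), of "\<lambda>c. if m = j0 then ?w c (Inr \<alpha>) else 0"]
          sum_unitv[OF finB b1(2), of "\<lambda>c. if m = i0 then ?w c (Inr \<alpha>) else 0"] by simp
      qed
      also have "\<dots> = (if m = j0 then lam k \<alpha> else - lam k \<alpha>)"
        using F1[OF kV aA] km ij by auto
      finally show ?thesis .
    qed
    have s2: "(\<Sum>c\<in>basis V A. ?w (Inr (i0,j0)) c * br A (unitv c) (unitv (Inl m)) (Inr \<alpha>)) = 0"
    proof (rule sum.neutral, intro ballI)
      fix c assume "c \<in> basis V A"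
      show "?w (Inr (i0,j0)) c * br A (unitv c) (unitv (Inl m)) (Inr \<alpha>) = 0"
      proof (cases c)
        case (Inl x)
        show ?thesis using F2[OF kV a0, of x] km ij abV ne aA ab Inl
          by (auto simp: br_def unitv_def)
      next
        case (Inr y)
        then show ?thesis by (auto simp: br_def unitv_def split: prod.splits)
      qed
    qed
    show ?thesis unfolding actR_def using s1 s2 by simp
  qed
  have nx: "nvec V A (unitv (Inl k))" if "k \<in> V" for k
    using that unfolding nvec_def basis_def unitv_def by auto
  have nji: "(j0,i0) \<notin> A" using AV[of j0 i0] ij by auto
  have brxy: "br A (unitv (Inl i0)) (unitv (Inl j0)) = unitv (Inr (i0,j0))"
    using ij a0 nji by (auto simp: br_def unitv_def fun_eq_iff split: sum.splits)
  have "\<delta> (br A (unitv (Inl i0)) (unitv (Inl j0))) =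
        (\<lambda>p q. actR V A (\<delta> (unitv (Inl i0))) (unitv (Inl j0)) p q
             - actR V A (\<delta> (unitv (Inl j0))) (unitv (Inl i0)) p q)"
  proof -
    have C: "\<forall>x y. nvec V A x \<longrightarrow> nvec V A y \<longrightarrow>
        \<delta> (br A x y) = (\<lambda>p q. actR V A (\<delta> x) y p q - actR V A (\<delta> y) x p q)"
      using bialg unfolding lie_bialg_def by (elim conjE)
    show ?thesis using C[rule_format, OF nx[OF ij(1)] nx[OF ij(2)]] .
  qed
  hence "(\<lambda>p q. 0) = (\<lambda>p q. actR V A (\<delta> (unitv (Inl i0))) (unitv (Inl j0)) p q
             - actR V A (\<delta> (unitv (Inl j0))) (unitv (Inl i0)) p q)"
    proof -
      have zz: "\<delta> (unitv (Inr (i0,j0))) = (\<lambda>p q. 0)" using z0 a0 by blast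
      from \<open>\<delta> (br A _ _) = _\<close> show ?thesis unfolding brxy zz .
    qed
  hence "0 = actR V A (\<delta> (unitv (Inl i0))) (unitv (Inl j0)) (Inr (i0,j0)) (Inr \<alpha>)
             - actR V A (\<delta> (unitv (Inl j0))) (unitv (Inl i0)) (Inr (i0,j0)) (Inr \<alpha>)"
    by (drule_tac x="Inr (i0,j0)" in fun_cong, drule_tac x="Inr \<alpha>" in fun_cong) simp
  moreover have "i0 \<noteq> j0" using ij by simp
  moreover note ACT[of i0 j0] ACT[of j0 i0]
  ultimately show "lam i0 \<alpha> = - lam j0 \<alpha>" by (simp add: eq_neg_iff_add_eq_0 algebra_simps)
qed

end
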